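(* Let $n\in\{2,3\}$, $s>\frac n2+1$, $(\mathbf u_0,\theta_0,\mathbf b_0)\in H^s_\sigma\times H^s\times H^s_\sigma$, let $T^\ast$ and the truncated solutions $(\mathbf u^R,\theta^R,\mathbf b^R)$ be as in the context, and let $(\mathbf u,\theta,\mathbf b)$ be their limit in $L^\infty([0,T^\ast];L^2_\sigma)\times L^\infty([0,T^\ast];L^2)\times L^\infty([0,T^\ast];L^2_\sigma)$ as $R\to\infty$. Then for any $s'$ with $\frac n2+1<s'<s$, $(\mathbf u^R,\theta^R,\mathbf b^R)\to(\mathbf u,\theta,\mathbf b)$ in $L^\infty([0,T^\ast];H^{s'}_\sigma(\mathbb R^n))\times L^\infty([0,T^\ast];H^{s'}(\mathbb R^n))\times L^\infty([0,T^\ast];H^{s'}_\sigma(\mathbb R^n))$.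
   Context: $\mathcal S_R$ is the Fourier truncation operator $\widehat{\mathcal S_R f}(\xi)=\mathbf 1_{B_R}(\xi)\widehat f(\xi)$, $B_R$ the ball of radius $R$ at $0$; $e_n$ the $n$-th unit vector. For $R>0$, $(\mathbf u^R,\theta^R,\mathbf b^R)$ solves the truncated system $\partial_t\mathbf u^R+\mathcal S_R[(\mathbf u^R\cdot\nabla)\mathbf u^R]+\nabla p^R=\theta^Re_n+\mathcal S_R[(\mathbf b^R\cdot\nabla)\mathbf b^R]$, $\partial_t\theta^R+\mathcal S_R[(\mathbf u^R\cdot\nabla)\theta^R]=\mathbf u^R\cdot e_n$, $\partial_t\mathbf b^R+\mathcal S_R[(\mathbf u^R\cdot\nabla)\mathbf b^R]=\mathcal S_R[(\mathbf b^R\cdot\nabla)\mathbf u^R]$, $\nabla\cdot\mathbf u^R=\nabla\cdot\mathbf b^R=0$, with data $(\mathcal S_R\mathbf u_0,\mathcal S_R\theta_0,\mathcal S_R\mathbf b_0)$. $T^\ast>0$ is a time, depending only on $s$ and the $H^s$ norms of the data, such that these solutions exist on $[0,T^\ast]$ with $H^s$ norms bounded uniformly in $R$ there; the family is then Cauchy in $L^\infty([0,T^\ast];L^2)$, which defines the limit. $H^s$ is the Sobolev space; $H^s_\sigma$, $L^2_\sigma$ the divergence-free vector fields in $H^s$, $L^2$. *)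

theory Defs
  imports "HOL-Analysis.Analysis"
begin

text \<open>All fields are represented on the Fourier side: a (real) function f on R^n
is represented by its Fourier transform, with the convention
fhat(xi) = integral of exp(-i x.xi) f(x) dx.  Thus products become
(2 pi)^(-n) times convolutions and derivatives d_j become multiplication by i xi_j.\<close>

definition hs_weight :: "real \<Rightarrow> ('n::euclidean_space) \<Rightarrow> real" where
  "hs_weight s \<xi> = (1 + (norm \<xi>)\<^sup>2) powr s"

text \<open>Sobolev H^s norm (via Fourier transform; s = 0 gives the L2 norm up to the
Plancherel constant).\<close>
definition hs_norm :: "real \<Rightarrow> (('n::euclidean_space) \<Rightarrow> 'b::real_normed_vector) \<Rightarrow> real" where
  "hs_norm s F = sqrt (\<integral>\<xi>. hs_weight s \<xi> * (norm (F \<xi>))\<^sup>2 \<partial>lborel)"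

text \<open>Hermitian symmetry of the Fourier transform = the function is real-valued.\<close>
definition real_sc :: "(real^'n \<Rightarrow> complex) \<Rightarrow> bool" where
  "real_sc F \<longleftrightarrow> (AE \<xi> in lborel. F (- \<xi>) = cnj (F \<xi>))"

definition real_vec :: "(real^'n \<Rightarrow> complex^'n) \<Rightarrow> bool" where
  "real_vec F \<longleftrightarrow> (AE \<xi> in lborel. F (- \<xi>) = (\<chi> j. cnj (F \<xi> $ j)))"

definition in_Hs_sc :: "real \<Rightarrow> (real^'n \<Rightarrow> complex) \<Rightarrow> bool" where
  "in_Hs_sc s F \<longleftrightarrow> F \<in> borel_measurable lborel
     \<and> integrable lborel (\<lambda>\<xi>. hs_weight s \<xi> * (norm (F \<xi>))\<^sup>2) \<and> real_sc F"

definition in_Hs_vec :: "real \<Rightarrow> (real^'n \<Rightarrow> complex^'n) \<Rightarrow> bool" where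
  "in_Hs_vec s F \<longleftrightarrow> F \<in> borel_measurable lborel
     \<and> integrable lborel (\<lambda>\<xi>. hs_weight s \<xi> * (norm (F \<xi>))\<^sup>2) \<and> real_vec F"

definition div_free :: "(real^'n \<Rightarrow> complex^'n) \<Rightarrow> bool" where
  "div_free F \<longleftrightarrow> (AE \<xi> in lborel. (\<Sum>j\<in>UNIV. complex_of_real (\<xi> $ j) * F \<xi> $ j) = 0)"

definition in_Hs_sigma :: "real \<Rightarrow> (real^'n \<Rightarrow> complex^'n) \<Rightarrow> bool" where
  "in_Hs_sigma s F \<longleftrightarrow> in_Hs_vec s F \<and> div_free F"

definition trunc :: "real \<Rightarrow> (real^'n \<Rightarrow> 'b::zero) \<Rightarrow> real^'n \<Rightarrow> 'b" where
  "trunc R F \<xi> = (if \<xi> \<in> ball 0 R then F \<xi> else 0)"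

text \<open>Fourier transform of (u . grad) g for a scalar g:
  (2 pi)^(-n) * integral over eta of sum_j uhat_j(xi - eta) (i eta_j) ghat(eta).\<close>
definition adv_sc :: "(real^'n \<Rightarrow> complex^'n) \<Rightarrow> (real^'n \<Rightarrow> complex) \<Rightarrow> real^'n \<Rightarrow> complex" where
  "adv_sc U G \<xi> = complex_of_real ((2 * pi) powr (- real CARD('n))) *
     (LINT \<eta>|lborel. (\<Sum>j\<in>UNIV. U (\<xi> - \<eta>) $ j * (\<i> * complex_of_real (\<eta> $ j)) * G \<eta>))"

definition adv_vec :: "(real^'n \<Rightarrow> complex^'n) \<Rightarrow> (real^'n \<Rightarrow> complex^'n) \<Rightarrow> real^'n \<Rightarrow> complex^'n" where
  "adv_vec U V \<xi> = (\<chi> i. adv_sc U (\<lambda>\<eta>. V \<eta> $ i) \<xi>)"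

definition grad_hat :: "(real^'n \<Rightarrow> complex) \<Rightarrow> real^'n \<Rightarrow> complex^'n" where
  "grad_hat P \<xi> = (\<chi> j. \<i> * complex_of_real (\<xi> $ j) * P \<xi>)"

end

theory Submission
  imports Defs
begin


lemma fatou_weighted:
  fixes f :: "nat \<Rightarrow> 'a \<Rightarrow> 'b::real_normed_vector" and g :: "'a \<Rightarrow> 'b" and w :: "'a \<Rightarrow> real"
  assumes fm[measurable]: "\<And>n. f n \<in> borel_measurable M" and gm[measurable]: "g \<in> borel_measurable M"
    and wm[measurable]: "w \<in> borel_measurable M" and wpos: "\<And>x. w x \<ge> 0"
    and fi: "\<And>n. integrable M (\<lambda>x. w x * norm (f n x)^2)"
    and fb: "\<And>n. (\<integral>x. w x * norm (f n x)^2 \<partial>M) \<le> C"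
    and di: "\<And>n. integrable M (\<lambda>x. norm (f n x - g x)^2)"
    and conv: "(\<lambda>n. \<integral>x. norm (f n x - g x)^2 \<partial>M) \<longlonglongrightarrow> 0"
  shows "integrable M (\<lambda>x. w x * norm (g x)^2) \<and> (\<integral>x. w x * norm (g x)^2 \<partial>M) \<le> C"
proof -
  have C0: "C \<ge> 0" using fb[of 0] integral_nonneg_AE[of "\<lambda>x. w x * norm (f 0 x)^2" M] wpos
    by (smt (verit) AE_I2 mult_nonneg_nonneg zero_le_power2)
  have "\<exists>r::nat\<Rightarrow>nat. strict_mono r \<and> (AE x in M. (\<lambda>n. norm (f (r n) x - g x)^2) \<longlonglongrightarrow> 0)"
    by (rule tendsto_L1_AE_subseq) (use di conv in auto)
  then obtain r :: "nat \<Rightarrow> nat" where r: "strict_mono r"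
    and ae: "AE x in M. (\<lambda>n. norm (f (r n) x - g x)^2) \<longlonglongrightarrow> 0" by blast
  have ae2: "AE x in M. (\<lambda>n. w x * norm (f (r n) x)^2) \<longlonglongrightarrow> w x * norm (g x)^2"
  proof (rule AE_mp[OF ae], intro AE_I2 impI)
    fix x assume h: "(\<lambda>n. norm (f (r n) x - g x)^2) \<longlonglongrightarrow> 0"
    have "(\<lambda>n. sqrt (norm (f (r n) x - g x)^2)) \<longlonglongrightarrow> sqrt 0"
      by (intro tendsto_intros h)
    hence "(\<lambda>n. norm (f (r n) x - g x)) \<longlonglongrightarrow> 0" by simp
    hence "(\<lambda>n. f (r n) x - g x) \<longlonglongrightarrow> 0" by (simp add: tendsto_norm_zero_iff)
    hence "(\<lambda>n. f (r n) x) \<longlonglongrightarrow> g x" by (simp add: LIM_zero_iff)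
    thus "(\<lambda>n. w x * norm (f (r n) x)^2) \<longlonglongrightarrow> w x * norm (g x)^2"
      by (intro tendsto_intros)
  qed
  have "(\<integral>\<^sup>+x. ennreal (w x * norm (g x)^2) \<partial>M)
      = (\<integral>\<^sup>+x. liminf (\<lambda>n. ennreal (w x * norm (f (r n) x)^2)) \<partial>M)"
  proof (rule nn_integral_cong_AE, rule AE_mp[OF ae2], intro AE_I2 impI)
    fix x assume "(\<lambda>n. w x * norm (f (r n) x)^2) \<longlonglongrightarrow> w x * norm (g x)^2"
    hence "(\<lambda>n. ennreal (w x * norm (f (r n) x)^2)) \<longlonglongrightarrow> ennreal (w x * norm (g x)^2)"
      by (rule tendsto_ennrealI)
    thus "ennreal (w x * norm (g x)^2) = liminf (\<lambda>n. ennreal (w x * norm (f (r n) x)^2))"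
      by (simp add: lim_imp_Liminf)
  qed
  also have "\<dots> \<le> liminf (\<lambda>n. \<integral>\<^sup>+x. ennreal (w x * norm (f (r n) x)^2) \<partial>M)"
    by (rule nn_integral_liminf) measurable
  also have "\<dots> \<le> liminf (\<lambda>n. ennreal C)"
  proof (rule Liminf_mono, intro always_eventually allI)
    fix n
    have "(\<integral>\<^sup>+x. ennreal (w x * norm (f (r n) x)^2) \<partial>M) = ennreal (\<integral>x. w x * norm (f (r n) x)^2 \<partial>M)"
      by (rule nn_integral_eq_integral) (use fi wpos in auto)
    also have "\<dots> \<le> ennreal C" using fb by (simp add: ennreal_leI)
    finally show "(\<integral>\<^sup>+x. ennreal (w x * norm (f (r n) x)^2) \<partial>M) \<le> ennreal C" .
  qed
  also have "\<dots> = ennreal C" by (simp add: Liminf_const)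
  finally have nn: "(\<integral>\<^sup>+x. ennreal (w x * norm (g x)^2) \<partial>M) \<le> ennreal C" .
  have int: "integrable M (\<lambda>x. w x * norm (g x)^2)"
  proof (rule integrableI_bounded)
    have "(\<integral>\<^sup>+x. ennreal (norm (w x * norm (g x)^2)) \<partial>M) = (\<integral>\<^sup>+x. ennreal (w x * norm (g x)^2) \<partial>M)"
      using wpos by (intro nn_integral_cong) simp
    also have "\<dots> \<le> ennreal C" by (rule nn)
    also have "\<dots> < \<infinity>" by simp
    finally show "(\<integral>\<^sup>+x. ennreal (norm (w x * norm (g x)^2)) \<partial>M) < \<infinity>" .
  qed simp
  have "ennreal (\<integral>x. w x * norm (g x)^2 \<partial>M) = (\<integral>\<^sup>+x. ennreal (w x * norm (g x)^2) \<partial>M)"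
    by (rule nn_integral_eq_integral[symmetric]) (use int wpos in auto)
  with nn have "ennreal (\<integral>x. w x * norm (g x)^2 \<partial>M) \<le> ennreal C" by simp
  hence "(\<integral>x. w x * norm (g x)^2 \<partial>M) \<le> C" using ennreal_le_iff[OF C0] by blast
  with int show ?thesis by blast
qed

lemma hsw_ge1: "s \<ge> 0 \<Longrightarrow> hs_weight s \<xi> \<ge> 1"
  unfolding hs_weight_def by (simp add: ge_one_powr_ge_zero)

lemma one_norm_pos: "1 + (norm \<xi>)^2 > (0::real)"
  by (smt (verit) zero_le_power2)

lemma hsw_pos: "hs_weight s \<xi> > 0"
  unfolding hs_weight_def using one_norm_pos[of \<xi>] by simp

lemma hsw0[simp]: "hs_weight 0 \<xi> = 1"
  unfolding hs_weight_def using one_norm_pos[of \<xi>] by simp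

lemma hsw_meas[measurable]: "(\<lambda>\<xi>. hs_weight s \<xi>) \<in> borel_measurable borel"
  unfolding hs_weight_def by measurable

lemma hsw_mono: "s' \<le> s \<Longrightarrow> hs_weight s' \<xi> \<le> hs_weight s \<xi>"
  unfolding hs_weight_def by (intro powr_mono) auto

lemma interp_pt:
  fixes x N s s' :: real
  assumes "x \<ge> 1" "N \<ge> 1" "0 < s'" "s' < s"
  shows "x powr s' \<le> N powr s' + N powr (s' - s) * x powr s"
proof (cases "x \<le> N")
  case True
  hence "x powr s' \<le> N powr s'" using assms by (intro powr_mono2) auto
  moreover have "N powr (s' - s) * x powr s \<ge> 0" by simp
  ultimately show ?thesis by linarith
next
  case False
  have "x powr s' = x powr (s' - s) * x powr s" by (simp add: powr_add[symmetric])
  also have "x powr (s' - s) \<le> N powr (s' - s)" using assms False by (intro powr_mono2') auto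
  hence "x powr (s' - s) * x powr s \<le> N powr (s' - s) * x powr s" by (intro mult_right_mono) auto
  finally show ?thesis by (smt (verit) powr_ge_zero)
qed

lemma hsw_interp:
  assumes "N \<ge> 1" "0 < s'" "s' < s"
  shows "hs_weight s' \<xi> \<le> N powr s' + N powr (s' - s) * hs_weight s \<xi>"
  unfolding hs_weight_def using assms by (intro interp_pt) auto

lemma norm_diff_sq: "norm (a - b :: 'b::real_normed_vector)^2 \<le> 2 * norm a ^2 + 2 * norm b ^2"
proof -
  have "norm (a - b) \<le> norm a + norm b" by (rule norm_triangle_ineq4)
  hence "norm (a - b)^2 \<le> (norm a + norm b)^2" by (intro power_mono) auto
  also have "\<dots> \<le> 2 * norm a ^2 + 2 * norm b ^2" by (smt (verit) sum_squares_bound power2_sum)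
  finally show ?thesis .
qed

lemma sqrt_le_sq: "x \<ge> 0 \<Longrightarrow> sqrt x \<le> e \<Longrightarrow> x \<le> e^2"
  by (metis real_sqrt_le_iff real_sqrt_pow2 power_mono real_sqrt_ge_zero)

lemma main_generic:
  fixes F :: "real \<Rightarrow> real \<Rightarrow> 'a::euclidean_space \<Rightarrow> 'b::{real_normed_vector,second_countable_topology}"
    and G :: "real \<Rightarrow> 'a \<Rightarrow> 'b" and T M s s' :: real
  assumes sp: "0 < s'" "s' < s" and T: "T \<ge> 0"
    and Fm: "\<And>R t. R > 0 \<Longrightarrow> t \<in> {0..T} \<Longrightarrow> F R t \<in> borel_measurable borel
         \<and> integrable lborel (\<lambda>\<xi>. hs_weight s \<xi> * (norm (F R t \<xi>))\<^sup>2)"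
    and Fb: "\<And>R t. R > 0 \<Longrightarrow> t \<in> {0..T} \<Longrightarrow> hs_norm s (F R t) \<le> M"
    and Gm: "\<And>t. t \<in> {0..T} \<Longrightarrow> G t \<in> borel_measurable borel
         \<and> integrable lborel (\<lambda>\<xi>. hs_weight 0 \<xi> * (norm (G t \<xi>))\<^sup>2)"
    and lim: "\<And>\<epsilon>. \<epsilon> > 0 \<Longrightarrow> \<forall>\<^sub>F R in at_top. \<forall>t\<in>{0..T}. hs_norm 0 (\<lambda>\<xi>. F R t \<xi> - G t \<xi>) \<le> \<epsilon>"
  shows "(\<forall>t\<in>{0..T}. integrable lborel (\<lambda>\<xi>. hs_weight s' \<xi> * (norm (G t \<xi>))\<^sup>2))
    \<and> (\<forall>\<epsilon>>0. \<forall>\<^sub>F R in at_top. \<forall>t\<in>{0..T}. hs_norm s' (\<lambda>\<xi>. F R t \<xi> - G t \<xi>) \<le> \<epsilon>)"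
proof -
  define A where "A = M^2"
  have s0: "s \<ge> 0" using sp by simp
  have Fm1: "F R t \<in> borel_measurable borel" if "R > 0" "t \<in> {0..T}" for R t
    using Fm[OF that] by blast
  have Fnn: "(\<integral>\<xi>. hs_weight s \<xi> * (norm (F R t \<xi>))\<^sup>2 \<partial>lborel) \<ge> 0" for R t
    by (intro integral_nonneg_AE AE_I2 mult_nonneg_nonneg) (auto simp: less_imp_le[OF hsw_pos])
  have M0: "M \<ge> 0"
  proof -
    have "hs_norm s (F 1 0) \<le> M" using Fb[of 1 0] T by simp
    moreover have "0 \<le> hs_norm s (F 1 0)" using Fnn[of 1 0] unfolding hs_norm_def by simp
    ultimately show ?thesis by linarith
  qed
  have FA: "(\<integral>\<xi>. hs_weight s \<xi> * (norm (F R t \<xi>))\<^sup>2 \<partial>lborel) \<le> A" if "R > 0" "t \<in> {0..T}" for R t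
    using Fb[OF that] Fnn[of R t] unfolding hs_norm_def A_def by (rule sqrt_le_sq[rotated])
  have FL2: "integrable lborel (\<lambda>\<xi>. (norm (F R t \<xi>))\<^sup>2)" if "R > 0" "t \<in> {0..T}" for R t
  proof (rule Bochner_Integration.integrable_bound[OF conjunct2[OF Fm[OF that]]])
    show "(\<lambda>\<xi>. (norm (F R t \<xi>))\<^sup>2) \<in> borel_measurable lborel" using conjunct1[OF Fm[OF that]] by measurable
    show "AE \<xi> in lborel. norm ((norm (F R t \<xi>))\<^sup>2) \<le> norm (hs_weight s \<xi> * (norm (F R t \<xi>))\<^sup>2)"
    proof (intro AE_I2)
      fix \<xi>
      have "1 * (norm (F R t \<xi>))\<^sup>2 \<le> hs_weight s \<xi> * (norm (F R t \<xi>))\<^sup>2"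
        using hsw_ge1[OF s0] by (intro mult_right_mono) auto
      thus "norm ((norm (F R t \<xi>))\<^sup>2) \<le> norm (hs_weight s \<xi> * (norm (F R t \<xi>))\<^sup>2)"
        using hsw_pos[of s \<xi>] by (simp add: abs_mult)
    qed
  qed
  have GL2: "integrable lborel (\<lambda>\<xi>. (norm (G t \<xi>))\<^sup>2)" if "t \<in> {0..T}" for t
    using Gm[OF that] by simp
  have DL2: "integrable lborel (\<lambda>\<xi>. (norm (F R t \<xi> - G t \<xi>))\<^sup>2)" if "R > 0" "t \<in> {0..T}" for R t
  proof (rule Bochner_Integration.integrable_bound)
    show "integrable lborel (\<lambda>\<xi>. 2 * (norm (F R t \<xi>))\<^sup>2 + 2 * (norm (G t \<xi>))\<^sup>2)"
      using FL2[OF that] GL2[OF that(2)] by simp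
    show "(\<lambda>\<xi>. (norm (F R t \<xi> - G t \<xi>))\<^sup>2) \<in> borel_measurable lborel"
      using conjunct1[OF Fm[OF that]] conjunct1[OF Gm[OF that(2)]] by measurable
    show "AE \<xi> in lborel. norm ((norm (F R t \<xi> - G t \<xi>))\<^sup>2) \<le> norm (2 * (norm (F R t \<xi>))\<^sup>2 + 2 * (norm (G t \<xi>))\<^sup>2)"
      using norm_diff_sq by (intro AE_I2) simp
  qed
  have Dsmall: "(\<integral>\<xi>. (norm (F R t \<xi> - G t \<xi>))\<^sup>2 \<partial>lborel) \<le> e^2"
    if "hs_norm 0 (\<lambda>\<xi>. F R t \<xi> - G t \<xi>) \<le> e" for R t e
    using that unfolding hs_norm_def by (intro sqrt_le_sq) auto
  have GHs: "integrable lborel (\<lambda>\<xi>. hs_weight s \<xi> * (norm (G t \<xi>))\<^sup>2)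
      \<and> (\<integral>\<xi>. hs_weight s \<xi> * (norm (G t \<xi>))\<^sup>2 \<partial>lborel) \<le> A" if t: "t \<in> {0..T}" for t
  proof (rule fatou_weighted[where f = "\<lambda>n. F (real n + 1) t"])
    show "\<And>n. F (real n + 1) t \<in> borel_measurable lborel" using Fm t by simp
    show "G t \<in> borel_measurable lborel" using Gm t by simp
    show "(\<lambda>\<xi>. hs_weight s \<xi>) \<in> borel_measurable lborel" by measurable
    show "\<And>x. hs_weight s x \<ge> 0" using hsw_pos less_imp_le by blast
    show "\<And>n. integrable lborel (\<lambda>x. hs_weight s x * (norm (F (real n + 1) t x))\<^sup>2)" using Fm t by simp
    show "\<And>n. (\<integral>x. hs_weight s x * (norm (F (real n + 1) t x))\<^sup>2 \<partial>lborel) \<le> A" using FA t by simp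
    show "\<And>n. integrable lborel (\<lambda>x. (norm (F (real n + 1) t x - G t x))\<^sup>2)" using DL2 t by simp
    show "(\<lambda>n. \<integral>x. (norm (F (real n + 1) t x - G t x))\<^sup>2 \<partial>lborel) \<longlonglongrightarrow> 0"
    proof (rule LIMSEQ_I)
      fix r :: real assume r: "r > 0"
      have fl: "filterlim (\<lambda>n::nat. real n + 1) at_top sequentially"
        using filterlim_tendsto_add_at_top[OF tendsto_const filterlim_real_sequentially, of "1::real"]
        by (simp add: add.commute)
      have "\<forall>\<^sub>F R in at_top. \<forall>t\<in>{0..T}. hs_norm 0 (\<lambda>\<xi>. F R t \<xi> - G t \<xi>) \<le> sqrt (r/2)"
        using r by (intro lim) simp
      hence "\<forall>\<^sub>F n in sequentially. \<forall>t\<in>{0..T}. hs_norm 0 (\<lambda>\<xi>. F (real n + 1) t \<xi> - G t \<xi>) \<le> sqrt (r/2)"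
        by (rule eventually_compose_filterlim[OF _ fl])
      hence "\<forall>\<^sub>F n in sequentially. hs_norm 0 (\<lambda>\<xi>. F (real n + 1) t \<xi> - G t \<xi>) \<le> sqrt (r/2)"
        by eventually_elim (use t in blast)
      hence "\<forall>\<^sub>F n in sequentially. (\<integral>x. (norm (F (real n + 1) t x - G t x))\<^sup>2 \<partial>lborel) \<le> r/2"
        by eventually_elim (use Dsmall r in force)
      then obtain N where N: "\<And>n. n \<ge> N \<Longrightarrow> (\<integral>x. (norm (F (real n + 1) t x - G t x))\<^sup>2 \<partial>lborel) \<le> r/2"
        unfolding eventually_sequentially by blast
      show "\<exists>no. \<forall>n\<ge>no. norm ((\<integral>x. (norm (F (real n + 1) t x - G t x))\<^sup>2 \<partial>lborel) - 0) < r"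
      proof (intro exI allI impI)
        fix n assume "n \<ge> N"
        moreover have "(\<integral>x. (norm (F (real n + 1) t x - G t x))\<^sup>2 \<partial>lborel) \<ge> 0"
          by (intro integral_nonneg_AE AE_I2) simp
        ultimately show "norm ((\<integral>x. (norm (F (real n + 1) t x - G t x))\<^sup>2 \<partial>lborel) - 0) < r"
          using N r by force
      qed
    qed
  qed
  have wnn: "\<And>r x. hs_weight r x \<ge> 0" using hsw_pos less_imp_le by blast
  have WD: "integrable lborel (\<lambda>\<xi>. hs_weight s \<xi> * (norm (F R t \<xi> - G t \<xi>))\<^sup>2)
      \<and> (\<integral>\<xi>. hs_weight s \<xi> * (norm (F R t \<xi> - G t \<xi>))\<^sup>2 \<partial>lborel) \<le> 4 * A"
    if "R > 0" "t \<in> {0..T}" for R t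
  proof -
    have i1: "integrable lborel (\<lambda>\<xi>. 2 * (hs_weight s \<xi> * (norm (F R t \<xi>))\<^sup>2) + 2 * (hs_weight s \<xi> * (norm (G t \<xi>))\<^sup>2))"
      using Fm[OF that] GHs[OF that(2)] by simp
    have pt: "hs_weight s \<xi> * (norm (F R t \<xi> - G t \<xi>))\<^sup>2 \<le> 2 * (hs_weight s \<xi> * (norm (F R t \<xi>))\<^sup>2) + 2 * (hs_weight s \<xi> * (norm (G t \<xi>))\<^sup>2)" for \<xi>
    proof -
      have "hs_weight s \<xi> * (norm (F R t \<xi> - G t \<xi>))\<^sup>2 \<le> hs_weight s \<xi> * (2 * (norm (F R t \<xi>))\<^sup>2 + 2 * (norm (G t \<xi>))\<^sup>2)"
        by (intro mult_left_mono norm_diff_sq wnn)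
      thus ?thesis by (simp add: algebra_simps)
    qed
    have i2: "integrable lborel (\<lambda>\<xi>. hs_weight s \<xi> * (norm (F R t \<xi> - G t \<xi>))\<^sup>2)"
    proof (rule Bochner_Integration.integrable_bound[OF i1])
      show "(\<lambda>\<xi>. hs_weight s \<xi> * (norm (F R t \<xi> - G t \<xi>))\<^sup>2) \<in> borel_measurable lborel"
        using conjunct1[OF Fm[OF that]] conjunct1[OF Gm[OF that(2)]] by measurable
      show "AE \<xi> in lborel. norm (hs_weight s \<xi> * (norm (F R t \<xi> - G t \<xi>))\<^sup>2) \<le> norm (2 * (hs_weight s \<xi> * (norm (F R t \<xi>))\<^sup>2) + 2 * (hs_weight s \<xi> * (norm (G t \<xi>))\<^sup>2))"
      proof (intro AE_I2)
        fix \<xi>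
        have a: "0 \<le> hs_weight s \<xi> * (norm (F R t \<xi> - G t \<xi>))\<^sup>2" by (intro mult_nonneg_nonneg wnn zero_le_power2)
        show "norm (hs_weight s \<xi> * (norm (F R t \<xi> - G t \<xi>))\<^sup>2) \<le> norm (2 * (hs_weight s \<xi> * (norm (F R t \<xi>))\<^sup>2) + 2 * (hs_weight s \<xi> * (norm (G t \<xi>))\<^sup>2))"
          using pt[of \<xi>] a by simp
      qed
    qed
    have "(\<integral>\<xi>. hs_weight s \<xi> * (norm (F R t \<xi> - G t \<xi>))\<^sup>2 \<partial>lborel)
        \<le> (\<integral>\<xi>. 2 * (hs_weight s \<xi> * (norm (F R t \<xi>))\<^sup>2) + 2 * (hs_weight s \<xi> * (norm (G t \<xi>))\<^sup>2) \<partial>lborel)"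
      by (rule integral_mono[OF i2 i1 pt])
    also have "\<dots> = 2 * (\<integral>\<xi>. hs_weight s \<xi> * (norm (F R t \<xi>))\<^sup>2 \<partial>lborel) + 2 * (\<integral>\<xi>. hs_weight s \<xi> * (norm (G t \<xi>))\<^sup>2 \<partial>lborel)"
      using Fm[OF that] GHs[OF that(2)] by simp
    also have "\<dots> \<le> 4 * A" using FA[OF that] GHs[OF that(2)] by simp
    finally show ?thesis using i2 by blast
  qed
  show ?thesis
  proof (intro conjI ballI allI impI)
    fix t assume t: "t \<in> {0..T}"
    show "integrable lborel (\<lambda>\<xi>. hs_weight s' \<xi> * (norm (G t \<xi>))\<^sup>2)"
    proof (rule Bochner_Integration.integrable_bound[OF conjunct1[OF GHs[OF t]]])
      show "(\<lambda>\<xi>. hs_weight s' \<xi> * (norm (G t \<xi>))\<^sup>2) \<in> borel_measurable lborel"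
        using conjunct1[OF Gm[OF t]] by measurable
      show "AE \<xi> in lborel. norm (hs_weight s' \<xi> * (norm (G t \<xi>))\<^sup>2) \<le> norm (hs_weight s \<xi> * (norm (G t \<xi>))\<^sup>2)"
      proof (intro AE_I2)
        fix \<xi>
        have "hs_weight s' \<xi> * (norm (G t \<xi>))\<^sup>2 \<le> hs_weight s \<xi> * (norm (G t \<xi>))\<^sup>2"
          using sp by (intro mult_right_mono hsw_mono) auto
        thus "norm (hs_weight s' \<xi> * (norm (G t \<xi>))\<^sup>2) \<le> norm (hs_weight s \<xi> * (norm (G t \<xi>))\<^sup>2)"
          using wnn[of s' \<xi>] by simp
      qed
    qed
  next
    fix \<epsilon> :: real assume e: "\<epsilon> > 0"
    have lp: "((\<lambda>N::real. N powr (s' - s)) \<longlongrightarrow> 0) at_top"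
      by (rule tendsto_neg_powr) (use sp in \<open>auto simp: filterlim_ident\<close>)
    have "((\<lambda>N::real. N powr (s' - s) * (4 * A)) \<longlongrightarrow> 0 * (4 * A)) at_top"
      by (intro tendsto_intros lp)
    hence "\<forall>\<^sub>F N in at_top. N powr (s' - s) * (4 * A) < \<epsilon>^2 / 2"
      using e by (intro order_tendstoD(2)) auto
    moreover have "\<forall>\<^sub>F N in at_top. (N::real) \<ge> 1" by (rule eventually_ge_at_top)
    ultimately have "\<forall>\<^sub>F N in at_top. N \<ge> 1 \<and> N powr (s' - s) * (4 * A) < \<epsilon>^2 / 2"
      by eventually_elim blast
    then obtain N0 :: real where N0: "\<And>n. n \<ge> N0 \<Longrightarrow> n \<ge> 1 \<and> n powr (s' - s) * (4 * A) < \<epsilon>^2 / 2"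
      unfolding eventually_at_top_linorder by auto
    define N where "N = N0"
    have N1: "N \<ge> 1" and NA: "N powr (s' - s) * (4 * A) < \<epsilon>^2 / 2"
      using N0[of N0] unfolding N_def by auto
    define \<delta> where "\<delta> = \<epsilon>^2 / (2 * N powr s')"
    have Np: "N powr s' > 0" using N1 by simp
    have d0: "\<delta> > 0" unfolding \<delta>_def using e Np by simp
    have Nd: "N powr s' * \<delta> = \<epsilon>^2 / 2" unfolding \<delta>_def using Np by simp
    have "\<forall>\<^sub>F R in at_top. \<forall>t\<in>{0..T}. hs_norm 0 (\<lambda>\<xi>. F R t \<xi> - G t \<xi>) \<le> sqrt \<delta>"
      using d0 by (intro lim) simp
    moreover have "\<forall>\<^sub>F R in at_top. (R::real) > 0" by (rule eventually_gt_at_top)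
    ultimately show "\<forall>\<^sub>F R in at_top. \<forall>t\<in>{0..T}. hs_norm s' (\<lambda>\<xi>. F R t \<xi> - G t \<xi>) \<le> \<epsilon>"
    proof eventually_elim
      case (elim R)
      show ?case
      proof
        fix t assume t: "t \<in> {0..T}"
        have L: "(\<integral>\<xi>. (norm (F R t \<xi> - G t \<xi>))\<^sup>2 \<partial>lborel) \<le> \<delta>"
          using Dsmall[of R t "sqrt \<delta>"] elim t d0 by simp
        have i1: "integrable lborel (\<lambda>\<xi>. N powr s' * (norm (F R t \<xi> - G t \<xi>))\<^sup>2 + N powr (s' - s) * (hs_weight s \<xi> * (norm (F R t \<xi> - G t \<xi>))\<^sup>2))"
          using DL2[of R t] WD[of R t] elim t by simp
        have pt: "hs_weight s' \<xi> * (norm (F R t \<xi> - G t \<xi>))\<^sup>2 \<le> N powr s' * (norm (F R t \<xi> - G t \<xi>))\<^sup>2 + N powr (s' - s) * (hs_weight s \<xi> * (norm (F R t \<xi> - G t \<xi>))\<^sup>2)" for \<xi>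
        proof -
          have "hs_weight s' \<xi> * (norm (F R t \<xi> - G t \<xi>))\<^sup>2 \<le> (N powr s' + N powr (s' - s) * hs_weight s \<xi>) * (norm (F R t \<xi> - G t \<xi>))\<^sup>2"
            using hsw_interp[OF N1 sp] by (intro mult_right_mono) auto
          thus ?thesis by (simp add: algebra_simps)
        qed
        have i2: "integrable lborel (\<lambda>\<xi>. hs_weight s' \<xi> * (norm (F R t \<xi> - G t \<xi>))\<^sup>2)"
        proof (rule Bochner_Integration.integrable_bound[OF i1])
          show "(\<lambda>\<xi>. hs_weight s' \<xi> * (norm (F R t \<xi> - G t \<xi>))\<^sup>2) \<in> borel_measurable lborel"
            using conjunct1[OF Fm[OF elim(2) t]] conjunct1[OF Gm[OF t]] by measurable
          show "AE \<xi> in lborel. norm (hs_weight s' \<xi> * (norm (F R t \<xi> - G t \<xi>))\<^sup>2) \<le> norm (N powr s' * (norm (F R t \<xi> - G t \<xi>))\<^sup>2 + N powr (s' - s) * (hs_weight s \<xi> * (norm (F R t \<xi> - G t \<xi>))\<^sup>2))"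
          proof (intro AE_I2)
            fix \<xi>
            have a: "0 \<le> hs_weight s' \<xi> * (norm (F R t \<xi> - G t \<xi>))\<^sup>2" by (intro mult_nonneg_nonneg wnn zero_le_power2)
            show "norm (hs_weight s' \<xi> * (norm (F R t \<xi> - G t \<xi>))\<^sup>2) \<le> norm (N powr s' * (norm (F R t \<xi> - G t \<xi>))\<^sup>2 + N powr (s' - s) * (hs_weight s \<xi> * (norm (F R t \<xi> - G t \<xi>))\<^sup>2))"
              using pt[of \<xi>] a by simp
          qed
        qed
        have "(\<integral>\<xi>. hs_weight s' \<xi> * (norm (F R t \<xi> - G t \<xi>))\<^sup>2 \<partial>lborel)
            \<le> (\<integral>\<xi>. N powr s' * (norm (F R t \<xi> - G t \<xi>))\<^sup>2 + N powr (s' - s) * (hs_weight s \<xi> * (norm (F R t \<xi> - G t \<xi>))\<^sup>2) \<partial>lborel)"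
          by (rule integral_mono[OF i2 i1 pt])
        also have "\<dots> = N powr s' * (\<integral>\<xi>. (norm (F R t \<xi> - G t \<xi>))\<^sup>2 \<partial>lborel) + N powr (s' - s) * (\<integral>\<xi>. hs_weight s \<xi> * (norm (F R t \<xi> - G t \<xi>))\<^sup>2 \<partial>lborel)"
          using DL2[of R t] WD[of R t] elim t by simp
        also have "\<dots> \<le> N powr s' * \<delta> + N powr (s' - s) * (4 * A)"
          using L WD[of R t] elim t Np by (intro add_mono mult_left_mono) auto
        also have "\<dots> \<le> \<epsilon>^2" using Nd NA by simp
        finally have "(\<integral>\<xi>. hs_weight s' \<xi> * (norm (F R t \<xi> - G t \<xi>))\<^sup>2 \<partial>lborel) \<le> \<epsilon>^2" .
        hence "hs_norm s' (\<lambda>\<xi>. F R t \<xi> - G t \<xi>) \<le> sqrt (\<epsilon>^2)"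
          unfolding hs_norm_def by (rule real_sqrt_le_mono)
        thus "hs_norm s' (\<lambda>\<xi>. F R t \<xi> - G t \<xi>) \<le> \<epsilon>" using e by simp
      qed
    qed
  qed
qed


theorem proposition3p5:
  fixes s s' T :: real
    and k :: "'n::finite"
    and u0 b0 :: "real^'n \<Rightarrow> complex^'n" and \<theta>0 :: "real^'n \<Rightarrow> complex"
    and uR bR :: "real \<Rightarrow> real \<Rightarrow> real^'n \<Rightarrow> complex^'n"
    and \<theta>R pR :: "real \<Rightarrow> real \<Rightarrow> real^'n \<Rightarrow> complex"
    and u b :: "real \<Rightarrow> real^'n \<Rightarrow> complex^'n" and \<theta> :: "real \<Rightarrow> real^'n \<Rightarrow> complex"
  assumes dim: "CARD('n) = 2 \<or> CARD('n) = 3"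
    and s: "s > real CARD('n) / 2 + 1"
    and data: "in_Hs_sigma s u0" "in_Hs_sc s \<theta>0" "in_Hs_sigma s b0"
    and T: "T > 0"
    and reg: "\<And>R t. R > 0 \<Longrightarrow> t \<in> {0..T} \<Longrightarrow>
       in_Hs_sigma s (uR R t) \<and> in_Hs_sc s (\<theta>R R t) \<and> in_Hs_sigma s (bR R t) \<and> real_sc (pR R t)"
    and bound: "\<exists>M. \<forall>R>0. \<forall>t\<in>{0..T}.
       hs_norm s (uR R t) \<le> M \<and> hs_norm s (\<theta>R R t) \<le> M \<and> hs_norm s (bR R t) \<le> M"
    and init: "\<And>R. R > 0 \<Longrightarrow>
       uR R 0 = trunc R u0 \<and> \<theta>R R 0 = trunc R \<theta>0 \<and> bR R 0 = trunc R b0"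
    and eqs: "\<And>R. R > 0 \<Longrightarrow> AE \<xi> in lborel. \<forall>t\<in>{0..T}.
       ((\<lambda>\<tau>. uR R \<tau> \<xi>) has_vector_derivative
          (- trunc R (adv_vec (uR R t) (uR R t)) \<xi> - grad_hat (pR R t) \<xi>
           + axis k (\<theta>R R t \<xi>) + trunc R (adv_vec (bR R t) (bR R t)) \<xi>)) (at t within {0..T})
     \<and> ((\<lambda>\<tau>. \<theta>R R \<tau> \<xi>) has_vector_derivative
          (- trunc R (adv_sc (uR R t) (\<theta>R R t)) \<xi> + uR R t \<xi> $ k)) (at t within {0..T})
     \<and> ((\<lambda>\<tau>. bR R \<tau> \<xi>) has_vector_derivative
          (- trunc R (adv_vec (uR R t) (bR R t)) \<xi> + trunc R (adv_vec (bR R t) (uR R t)) \<xi>))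
          (at t within {0..T})"
    and lim_reg: "\<And>t. t \<in> {0..T} \<Longrightarrow>
       in_Hs_sigma 0 (u t) \<and> in_Hs_sc 0 (\<theta> t) \<and> in_Hs_sigma 0 (b t)"
    and lim: "\<And>\<epsilon>. \<epsilon> > 0 \<Longrightarrow> \<forall>\<^sub>F R in at_top. \<forall>t\<in>{0..T}.
       hs_norm 0 (\<lambda>\<xi>. uR R t \<xi> - u t \<xi>) \<le> \<epsilon> \<and> hs_norm 0 (\<lambda>\<xi>. \<theta>R R t \<xi> - \<theta> t \<xi>) \<le> \<epsilon>
       \<and> hs_norm 0 (\<lambda>\<xi>. bR R t \<xi> - b t \<xi>) \<le> \<epsilon>"
    and s': "real CARD('n) / 2 + 1 < s'" "s' < s"
  shows "(\<forall>t\<in>{0..T}. in_Hs_sigma s' (u t) \<and> in_Hs_sc s' (\<theta> t) \<and> in_Hs_sigma s' (b t))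
    \<and> (\<forall>\<epsilon>>0. \<forall>\<^sub>F R in at_top. \<forall>t\<in>{0..T}.
       hs_norm s' (\<lambda>\<xi>. uR R t \<xi> - u t \<xi>) \<le> \<epsilon> \<and> hs_norm s' (\<lambda>\<xi>. \<theta>R R t \<xi> - \<theta> t \<xi>) \<le> \<epsilon>
       \<and> hs_norm s' (\<lambda>\<xi>. bR R t \<xi> - b t \<xi>) \<le> \<epsilon>)"
proof -
  have s'0: "0 < s'" using s' by (smt (verit) divide_nonneg_nonneg of_nat_0_le_iff)
  have ss: "s' < s" using s' by simp
  have T0: "T \<ge> 0" using T by simp
  obtain M where M: "\<forall>R>0. \<forall>t\<in>{0..T}.
       hs_norm s (uR R t) \<le> M \<and> hs_norm s (\<theta>R R t) \<le> M \<and> hs_norm s (bR R t) \<le> M"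
    using bound by blast
  have U: "(\<forall>t\<in>{0..T}. integrable lborel (\<lambda>\<xi>. hs_weight s' \<xi> * (norm (u t \<xi>))\<^sup>2))
    \<and> (\<forall>\<epsilon>>0. \<forall>\<^sub>F R in at_top. \<forall>t\<in>{0..T}. hs_norm s' (\<lambda>\<xi>. uR R t \<xi> - u t \<xi>) \<le> \<epsilon>)"
  proof (rule main_generic[OF s'0 ss T0])
    show "\<And>R t. R > 0 \<Longrightarrow> t \<in> {0..T} \<Longrightarrow> uR R t \<in> borel_measurable borel
         \<and> integrable lborel (\<lambda>\<xi>. hs_weight s \<xi> * (norm (uR R t \<xi>))\<^sup>2)"
      using reg unfolding in_Hs_sigma_def in_Hs_vec_def by auto
    show "\<And>R t. R > 0 \<Longrightarrow> t \<in> {0..T} \<Longrightarrow> hs_norm s (uR R t) \<le> M" using M by blast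
    show "\<And>t. t \<in> {0..T} \<Longrightarrow> u t \<in> borel_measurable borel
         \<and> integrable lborel (\<lambda>\<xi>. hs_weight 0 \<xi> * (norm (u t \<xi>))\<^sup>2)"
      using lim_reg unfolding in_Hs_sigma_def in_Hs_vec_def by auto
    show "\<And>\<epsilon>. \<epsilon> > 0 \<Longrightarrow> \<forall>\<^sub>F R in at_top. \<forall>t\<in>{0..T}. hs_norm 0 (\<lambda>\<xi>. uR R t \<xi> - u t \<xi>) \<le> \<epsilon>"
      by (rule eventually_mono[OF lim]) auto
  qed
  have TH: "(\<forall>t\<in>{0..T}. integrable lborel (\<lambda>\<xi>. hs_weight s' \<xi> * (norm (\<theta> t \<xi>))\<^sup>2))
    \<and> (\<forall>\<epsilon>>0. \<forall>\<^sub>F R in at_top. \<forall>t\<in>{0..T}. hs_norm s' (\<lambda>\<xi>. \<theta>R R t \<xi> - \<theta> t \<xi>) \<le> \<epsilon>)"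
  proof (rule main_generic[OF s'0 ss T0])
    show "\<And>R t. R > 0 \<Longrightarrow> t \<in> {0..T} \<Longrightarrow> \<theta>R R t \<in> borel_measurable borel
         \<and> integrable lborel (\<lambda>\<xi>. hs_weight s \<xi> * (norm (\<theta>R R t \<xi>))\<^sup>2)"
      using reg unfolding in_Hs_sc_def by auto
    show "\<And>R t. R > 0 \<Longrightarrow> t \<in> {0..T} \<Longrightarrow> hs_norm s (\<theta>R R t) \<le> M" using M by blast
    show "\<And>t. t \<in> {0..T} \<Longrightarrow> \<theta> t \<in> borel_measurable borel
         \<and> integrable lborel (\<lambda>\<xi>. hs_weight 0 \<xi> * (norm (\<theta> t \<xi>))\<^sup>2)"
      using lim_reg unfolding in_Hs_sc_def by auto
    show "\<And>\<epsilon>. \<epsilon> > 0 \<Longrightarrow> \<forall>\<^sub>F R in at_top. \<forall>t\<in>{0..T}. hs_norm 0 (\<lambda>\<xi>. \<theta>R R t \<xi> - \<theta> t \<xi>) \<le> \<epsilon>"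
      by (rule eventually_mono[OF lim]) auto
  qed
  have B: "(\<forall>t\<in>{0..T}. integrable lborel (\<lambda>\<xi>. hs_weight s' \<xi> * (norm (b t \<xi>))\<^sup>2))
    \<and> (\<forall>\<epsilon>>0. \<forall>\<^sub>F R in at_top. \<forall>t\<in>{0..T}. hs_norm s' (\<lambda>\<xi>. bR R t \<xi> - b t \<xi>) \<le> \<epsilon>)"
  proof (rule main_generic[OF s'0 ss T0])
    show "\<And>R t. R > 0 \<Longrightarrow> t \<in> {0..T} \<Longrightarrow> bR R t \<in> borel_measurable borel
         \<and> integrable lborel (\<lambda>\<xi>. hs_weight s \<xi> * (norm (bR R t \<xi>))\<^sup>2)"
      using reg unfolding in_Hs_sigma_def in_Hs_vec_def by auto
    show "\<And>R t. R > 0 \<Longrightarrow> t \<in> {0..T} \<Longrightarrow> hs_norm s (bR R t) \<le> M" using M by blast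
    show "\<And>t. t \<in> {0..T} \<Longrightarrow> b t \<in> borel_measurable borel
         \<and> integrable lborel (\<lambda>\<xi>. hs_weight 0 \<xi> * (norm (b t \<xi>))\<^sup>2)"
      using lim_reg unfolding in_Hs_sigma_def in_Hs_vec_def by auto
    show "\<And>\<epsilon>. \<epsilon> > 0 \<Longrightarrow> \<forall>\<^sub>F R in at_top. \<forall>t\<in>{0..T}. hs_norm 0 (\<lambda>\<xi>. bR R t \<xi> - b t \<xi>) \<le> \<epsilon>"
      by (rule eventually_mono[OF lim]) auto
  qed
  show ?thesis
  proof (intro conjI ballI allI impI)
    fix t assume t: "t \<in> {0..T}"
    show "in_Hs_sigma s' (u t)" using lim_reg[OF t] U t
      unfolding in_Hs_sigma_def in_Hs_vec_def by auto
    show "in_Hs_sc s' (\<theta> t)" using lim_reg[OF t] TH t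
      unfolding in_Hs_sc_def by auto
    show "in_Hs_sigma s' (b t)" using lim_reg[OF t] B t
      unfolding in_Hs_sigma_def in_Hs_vec_def by auto
  next
    fix \<epsilon> :: real assume e: "\<epsilon> > 0"
    have e1: "\<forall>\<^sub>F R in at_top. \<forall>t\<in>{0..T}. hs_norm s' (\<lambda>\<xi>. uR R t \<xi> - u t \<xi>) \<le> \<epsilon>" using U e by blast
    have e2: "\<forall>\<^sub>F R in at_top. \<forall>t\<in>{0..T}. hs_norm s' (\<lambda>\<xi>. \<theta>R R t \<xi> - \<theta> t \<xi>) \<le> \<epsilon>" using TH e by blast
    have e3: "\<forall>\<^sub>F R in at_top. \<forall>t\<in>{0..T}. hs_norm s' (\<lambda>\<xi>. bR R t \<xi> - b t \<xi>) \<le> \<epsilon>" using B e by blast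
    from e1 e2 e3 show "\<forall>\<^sub>F R in at_top. \<forall>t\<in>{0..T}.
       hs_norm s' (\<lambda>\<xi>. uR R t \<xi> - u t \<xi>) \<le> \<epsilon> \<and> hs_norm s' (\<lambda>\<xi>. \<theta>R R t \<xi> - \<theta> t \<xi>) \<le> \<epsilon>
       \<and> hs_norm s' (\<lambda>\<xi>. bR R t \<xi> - b t \<xi>) \<le> \<epsilon>"
      by eventually_elim blast
  qed
qed

end
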